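(* There exists a function $\rho$ from the set of all (finite) instruction sequences to the set of closed terms of BTA extended with explicit substitution such that for every instruction sequence $P$: $\mathrm{elim}(\rho(P))$ is identical to $|P|$, and $\mathrm{size}(\rho(P))\le 4\cdot\mathrm{len}(P)+1$.
   Context: Fix a set of basic instructions (actions). A primitive instruction is one of: $a$, $+a$, $-a$ (for a basic instruction $a$), $\#l$ ($l\in\mathbb N$), or $!$. An instruction sequence is a finite nonempty sequence $P=u_1;\dots;u_k$ of primitive instructions; $\mathrm{len}(P)=k$. Terms of BTA with explicit substitution: fix a countably infinite set of variables; terms are variables $x$, the constants $S$ (termination) and $D$ (deadlock), postconditional compositions $p\trianglelefteq a\trianglerighteq q$ for terms $p,q$ and basic instruction $a$, and substitutions $[p/x]q$ for terms $p,q$ and variable $x$. Write $a\circ p$ for $p\trianglelefteq a\trianglerighteq p$. A term is closed if it has no variable occurrences outside the bound position of substitution... more precisely, closed means $\mathrm{elim}$ of it contains no variables. Size: $\mathrm{size}(x)=\mathrm{size}(S)=\mathrm{size}(D)=1$, $\mathrm{size}(p\trianglelefteq a\trianglerighteq q)=\mathrm{size}(p)+\mathrm{size}(q)+1$, $\mathrm{size}([p/x]q)=\mathrm{size}(p)+\mathrm{size}(q)+1$. Substitution elimination $\mathrm{elim}$: $\mathrm{elim}(x)=x$, $\mathrm{elim}(S)=S$, $\mathrm{elim}(D)=D$, $\mathrm{elim}(p\trianglelefteq a\trianglerighteq q)=\mathrm{elim}(p)\trianglelefteq a\trianglerighteq\mathrm{elim}(q)$, and $\mathrm{elim}([p/x]q)$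 is obtained from $\mathrm{elim}(q)$ by replacing every occurrence of $x$ by $\mathrm{elim}(p)$ (this corresponds to the axioms $[p/x]x=p$, $[p/x]y=y$ for $y\ne x$, $[p/x]S=S$, $[p/x]D=D$, $[p/x](q\trianglelefteq a\trianglerighteq r)=([p/x]q)\trianglelefteq a\trianglerighteq([p/x]r)$). Thread extraction $|\cdot|$ maps instruction sequences to substitution-free closed terms by: $|a|=a\circ D$; $|a;Y|=a\circ|Y|$; $|+a|=a\circ D$; $|+a;Y|=|Y|\trianglelefteq a\trianglerighteq|\#2;Y|$; $|-a|=a\circ D$; $|-a;Y|=|\#2;Y|\trianglelefteq a\trianglerighteq|Y|$; $|\#l|=D$; $|\#0;Y|=D$; $|\#1;Y|=|Y|$; $|\#(l+2);u|=D$ for a primitive instruction $u$; $|\#(l+2);u;Y|=|\#(l+1);Y|$; $|!|=S$; $|!;Y|=S$. *)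

theory Defs
  imports Main
begin

datatype 'a prim = Basic 'a | PTest 'a | NTest 'a | Jump nat | Halt

text \<open>Terms of BTA with explicit substitution; variables are indexed by nat.
  Subst p x q stands for [p/x]q.\<close>
datatype 'a bterm = Var nat | S | D | PC "'a bterm" 'a "'a bterm" | Subst "'a bterm" nat "'a bterm"

definition postfix :: "'a \<Rightarrow> 'a bterm \<Rightarrow> 'a bterm" where
  "postfix a p = PC p a p"

fun tsize :: "'a bterm \<Rightarrow> nat" where
  "tsize (Var x) = 1"
| "tsize S = 1"
| "tsize D = 1"
| "tsize (PC p a q) = tsize p + tsize q + 1"
| "tsize (Subst p x q) = tsize p + tsize q + 1"

fun repl :: "'a bterm \<Rightarrow> nat \<Rightarrow> 'a bterm \<Rightarrow> 'a bterm" where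
  "repl r x (Var y) = (if y = x then r else Var y)"
| "repl r x S = S"
| "repl r x D = D"
| "repl r x (PC p a q) = PC (repl r x p) a (repl r x q)"
| "repl r x (Subst p y q) = Subst (repl r x p) y (repl r x q)"

fun elim :: "'a bterm \<Rightarrow> 'a bterm" where
  "elim (Var x) = Var x"
| "elim S = S"
| "elim D = D"
| "elim (PC p a q) = PC (elim p) a (elim q)"
| "elim (Subst p x q) = repl (elim p) x (elim q)"

fun vars :: "'a bterm \<Rightarrow> nat set" where
  "vars (Var x) = {x}"
| "vars S = {}"
| "vars D = {}"
| "vars (PC p a q) = vars p \<union> vars q"
| "vars (Subst p x q) = vars p \<union> vars q"

definition closed :: "'a bterm \<Rightarrow> bool" where
  "closed t \<longleftrightarrow> vars (elim t) = {}"

fun is_jump :: "'a prim \<Rightarrow> bool" where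
  "is_jump (Jump l) = True"
| "is_jump _ = False"

text \<open>Thread extraction (instruction sequences are nonempty lists; the value on [] is junk).\<close>
function extr :: "'a prim list \<Rightarrow> 'a bterm" where
  "extr [] = D"
| "extr [Basic a] = postfix a D"
| "extr (Basic a # y # Y) = postfix a (extr (y # Y))"
| "extr [PTest a] = postfix a D"
| "extr (PTest a # y # Y) = PC (extr (y # Y)) a (extr (Jump 2 # y # Y))"
| "extr [NTest a] = postfix a D"
| "extr (NTest a # y # Y) = PC (extr (Jump 2 # y # Y)) a (extr (y # Y))"
| "extr [Jump l] = D"
| "extr (Jump 0 # y # Y) = D"
| "extr (Jump (Suc 0) # y # Y) = extr (y # Y)"
| "extr [Jump (Suc (Suc l)), u] = D"
| "extr (Jump (Suc (Suc l)) # u # y # Y) = extr (Jump (Suc l) # y # Y)"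
| "extr [Halt] = S"
| "extr (Halt # y # Y) = S"
  by pat_completeness auto
termination
  by (relation "measure (\<lambda>xs. 2 * length xs + (case xs of [] \<Rightarrow> 0 | x # _ \<Rightarrow> if is_jump x then 0 else 1))") auto

end

theory Submission
  imports Defs
begin

fun sub :: "(nat \<Rightarrow> 'a bterm) \<Rightarrow> 'a bterm \<Rightarrow> 'a bterm" where
  "sub g (Var x) = g x"
| "sub g S = S"
| "sub g D = D"
| "sub g (PC p a q) = PC (sub g p) a (sub g q)"
| "sub g (Subst p x q) = Subst (sub g p) x (sub g q)"

lemma sub_repl: "sub g (repl r x t) = sub (g(x := sub g r)) t"
  by (induction t) auto

lemma sub_cong: "(\<And>j. j \<in> vars t \<Longrightarrow> g j = h j) \<Longrightarrow> sub g t = sub h t"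
  by (induction t) auto

lemma sub_novars: "vars t = {} \<Longrightarrow> sub g t = t"
  by (induction t) auto

lemma vars_repl: "vars (repl r x t) \<subseteq> (vars t - {x}) \<union> vars r"
  by (induction t) auto

lemma extr_jump: "extr (Jump (Suc l) # Y) = (if l < length Y then extr (drop l Y) else D)"
proof (induction l arbitrary: Y)
  case 0
  then show ?case by (cases Y) auto
next
  case (Suc l)
  show ?case
  proof (cases Y)
    case Nil then show ?thesis by simp
  next
    case (Cons u Y')
    show ?thesis
    proof (cases Y')
      case Nil then show ?thesis using Cons by simp
    next
      case (Cons y Y'')
      then show ?thesis using \<open>Y = u # Y'\<close> Suc.IH[of Y'] by simp
    qed
  qed
qed

lemma extr_jump2: "extr (Jump 2 # y # Y) = extr Y"
  using extr_jump[of 1 "y # Y"] by (cases Y) (auto simp: numeral_2_eq_2)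

definition Lg :: "(nat \<Rightarrow> 'a bterm) \<Rightarrow> 'a prim list \<Rightarrow> nat \<Rightarrow> 'a bterm" where
  "Lg v P i = (case P ! i of Basic a \<Rightarrow> postfix a (v (i+1))
     | PTest a \<Rightarrow> PC (v (i+1)) a (v (i+2))
     | NTest a \<Rightarrow> PC (v (i+2)) a (v (i+1))
     | Jump l \<Rightarrow> (if l = 0 then D else v (i+l))
     | Halt \<Rightarrow> S)"

lemma sub_Lg: "sub g (Lg v P i) = Lg (\<lambda>j. sub g (v j)) P i"
  by (cases "P ! i") (auto simp: Lg_def postfix_def)

lemma extr_drop: "i < length P \<Longrightarrow> extr (drop i P) = Lg (\<lambda>j. extr (drop j P)) P i"
proof -
  assume i: "i < length P"
  have d: "drop i P = P ! i # drop (Suc i) P" using i by (simp add: Cons_nth_drop_Suc)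
  have d2: "drop (Suc (Suc i)) P = drop 1 (drop (Suc i) P)" by simp
  show ?thesis
  proof (cases "P ! i")
    case (Jump l)
    show ?thesis
    proof (cases l)
      case 0 then show ?thesis using Jump d
        by (cases "drop (Suc i) P") (auto simp: Lg_def postfix_def extr_jump2)
    next
      case (Suc l')
      have e: "drop l' (drop (Suc i) P) = drop (i + l) P" using Suc by (simp add: add.commute)
      show ?thesis using Jump Suc d extr_jump[of l' "drop (Suc i) P"] e
        by (auto simp: Lg_def)
    qed
  next
    case (Basic a) then show ?thesis using d
      by (cases "drop (Suc i) P") (auto simp: Lg_def postfix_def extr_jump2)
  next
    case (PTest a) then show ?thesis using d d2
      by (cases "drop (Suc i) P") (auto simp: Lg_def postfix_def extr_jump2)
  next
    case (NTest a) then show ?thesis using d d2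
      by (cases "drop (Suc i) P") (auto simp: Lg_def postfix_def extr_jump2)
  next
    case Halt then show ?thesis using d
      by (cases "drop (Suc i) P") (auto simp: Lg_def postfix_def extr_jump2)
  qed
qed

definition L :: "'a prim list \<Rightarrow> nat \<Rightarrow> 'a bterm" where
  "L P i = Lg (\<lambda>j. if j < length P then Var j else D) P i"

lemma elim_L: "elim (L P i) = L P i"
  by (cases "P ! i") (auto simp: L_def Lg_def postfix_def)

lemma vars_L: "vars (L P i) \<subseteq> {i+1..<length P}"
  by (cases "P ! i") (auto simp: L_def Lg_def postfix_def)

lemma tsize_L: "tsize (L P i) \<le> 3"
  by (cases "P ! i") (auto simp: L_def Lg_def postfix_def)

lemma sub_L: "sub (\<lambda>j. extr (drop j P)) (L P i) = Lg (\<lambda>j. extr (drop j P)) P i"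
  unfolding L_def sub_Lg by (rule arg_cong[where f="\<lambda>v. Lg v P i"]) auto

fun C :: "'a prim list \<Rightarrow> nat \<Rightarrow> 'a bterm" where
  "C P 0 = Var 0"
| "C P (Suc m) = Subst (L P m) m (C P m)"

lemma tsize_C: "tsize (C P m) \<le> 4 * m + 1"
proof (induction m)
  case (Suc m)
  then show ?case using tsize_L[of P m] by simp
qed simp

lemma inv_C:
  assumes "m \<le> length P" "P \<noteq> []"
  shows "vars (elim (C P m)) \<subseteq> {m..<length P} \<and>
         sub (\<lambda>j. if j < m then Var j else extr (drop j P)) (elim (C P m)) = extr P"
  using assms
proof (induction m)
  case 0
  then show ?case by simp
next
  case (Suc m)
  let ?E = "\<lambda>j. extr (drop j P)"
  let ?g = "\<lambda>j. if j < Suc m then Var j else ?E j"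
  let ?h = "\<lambda>j. if j < m then Var j else ?E j"
  have IH: "vars (elim (C P m)) \<subseteq> {m..<length P}" "sub ?h (elim (C P m)) = extr P"
    using Suc by auto
  have el: "elim (C P (Suc m)) = repl (L P m) m (elim (C P m))" by (simp add: elim_L)
  have v: "vars (elim (C P (Suc m))) \<subseteq> {Suc m..<length P}"
  proof -
    have "vars (elim (C P (Suc m))) \<subseteq> (vars (elim (C P m)) - {m}) \<union> vars (L P m)"
      unfolding el by (rule vars_repl)
    also have "\<dots> \<subseteq> ({m..<length P} - {m}) \<union> {Suc m..<length P}"
      using IH(1) vars_L[of P m] by (intro Un_mono Diff_mono) auto
    also have "\<dots> \<subseteq> {Suc m..<length P}" by auto
    finally show ?thesis .
  qed
  have sgL: "sub ?g (L P m) = ?E m"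
  proof -
    have "sub ?g (L P m) = sub ?E (L P m)"
      by (rule sub_cong) (use vars_L[of P m] in auto)
    also have "\<dots> = Lg ?E P m" by (rule sub_L)
    also have "\<dots> = ?E m" using extr_drop[of m P] Suc.prems by simp
    finally show ?thesis .
  qed
  have eqf: "?g(m := sub ?g (L P m)) = ?h" using sgL by (auto simp: fun_eq_iff)
  have "sub ?g (elim (C P (Suc m))) = sub (?g(m := sub ?g (L P m))) (elim (C P m))"
    unfolding el by (rule sub_repl)
  also have "\<dots> = sub ?h (elim (C P m))" by (simp only: eqf)
  also have "\<dots> = extr P" by (rule IH(2))
  finally have "sub ?g (elim (C P (Suc m))) = extr P" .
  then show ?case using v by simp
qed

theorem theoremA:
  shows "\<exists>\<rho> :: 'a prim list \<Rightarrow> 'a bterm. \<forall>P. P \<noteq> [] \<longrightarrow>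
           closed (\<rho> P) \<and> elim (\<rho> P) = extr P \<and> tsize (\<rho> P) \<le> 4 * length P + 1"
proof (intro exI allI impI)
  fix P :: "'a prim list"
  assume P: "P \<noteq> []"
  have I: "vars (elim (C P (length P))) = {}"
    "sub (\<lambda>j. if j < length P then Var j else extr (drop j P)) (elim (C P (length P))) = extr P"
    using inv_C[of "length P" P] P by auto
  show "closed (C P (length P)) \<and> elim (C P (length P)) = extr P \<and> tsize (C P (length P)) \<le> 4 * length P + 1"
  proof (intro conjI)
    show "closed (C P (length P))" unfolding closed_def by (rule I(1))
    show "elim (C P (length P)) = extr P" using I(2) sub_novars[OF I(1)] by simp
    show "tsize (C P (length P)) \<le> 4 * length P + 1" by (rule tsize_C)
  qed
qed

end
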